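(* (i) There is $r^\Delta\in R_{\omega\cdot\omega+\omega}$ such that $\sigma(r^\Delta)\in Q_*$ and $\sigma(p\Lsh r^\Delta)\in Q_*$ for all $p\in R$. (ii) There is $r^{\mathrm{mult}}\in R_{\omega\cdot\omega+\omega}$ such that for every $\phi\in Q_*$ there is $r\in R_{\omega\cdot\omega+\omega}$ with $\sigma(r^{\mathrm{mult}})\circ\phi=\sigma(r)$.
   Context: Throughout, $\delta$ denotes a nonzero countable limit ordinal. Terms: variables are $x_{l,k}$ ($l,k\in\omega$), each taking values in $\{0,1\}$. A term $t$ is given by a finite sequence of variables $(v_0,\dots,v_{r-1})$ and a function $F:2^r\to2$; a variable $v$ is identified with the term $((v),\mathrm{id})$. An assignment $a$ maps variables to $\{0,1\}$ and extends to terms by $t\circ a=F(v_0\circ a,\dots,v_{r-1}\circ a)$. A substitution $\phi$ maps variables to terms; $t\circ\phi$ replaces each variable $v$ in $t$ by $\phi(v)$, and $\bar t\circ\phi=(t_i\circ\phi)_i$ for families. Terms are identified modulo $t=^*s$ iff $t\circ a=s\circ a$ for all assignments $a$. A term depends only on variables in $Y$ if it is $=^*$ to a term using only variables from $Y$. A term or variable $s$ is determined by terms $t_0,\dots,t_n$ if for all assignments $a,b$, $(t_i\circ a)_{i\le n}=(t_i\circ b)_{i\le n}$ implies $s\circ a=s\circ b$. $Q_*$: let $\tau(n,m)=n+\tfrac12(n+m)(n+m+1)$ and $(i,j)\unlhd(n,m)$ iff $\tau(i,j)\le\tau(n,m)$. $Q_*$ is the set of squares $\bar t=(t_{n,m})_{n,m\in\omega}$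 of terms with (1) $t_{n,m}$ depends only on $x_{i,j}$ with $(i,j)\unlhd(n,m)$, (2) each $x_{i,j}$ is determined by finitely many $t_{n,m}$; an element $\phi\in Q_*$ is regarded as the substitution $x_{i,j}\mapsto\phi_{i,j}$, and $\bar t\le\bar s$ iff $\bar t=\bar s\circ\phi$ for some $\phi\in Q_*$. The forcing $\tilde P$: a condition $\tilde p$ has height $\mathrm{ht}(\tilde p)<\omega_1$ and consists of, for every limit $\delta<\mathrm{ht}(\tilde p)$ and $n,m,k\in\omega$: a cofinal $\nu_{\delta,n,m}\subseteq\delta$ of order type $\omega$, with $\nu_{\delta,n,m_1}\cap\nu_{\delta,n,m_2}=\emptyset$ for $m_1\ne m_2$; a strictly increasing $j_{\delta,n,m}:\omega\to\omega$; and a surjective $f_{\delta,n,m,k}:2^{[j_{\delta,n,m}(k),\,j_{\delta,n,m}(k+1)-1]}\to2$; ordered by extension. For $\eta$ into $2$ with domain containing $\nu_{\delta,n,m}$, with $\zeta_i$ the $i$-th element of $\nu_{\delta,n,m}$, $g_{\delta,n,m,k}(\eta)=f_{\delta,n,m,k}((\eta(\zeta_i))_{j_{\delta,n,m}(k)\le i<j_{\delta,n,m}(k+1)})$. The set $R$: $R=\bigcup_{\delta<\omega_1}R_{\delta+\omega}$, where $p\in R_{\delta+\omega}$ consists of $\tilde p\in\tilde P$ with $\mathrm{ht}(\tilde p)=\delta+1$ and terms $\bar p=(p_{n,\alpha})_{n\in\omega,\alpha<\delta+\omega}$ such that $p_{n,\delta+m}=x_{n,m}$; for $\alpha<\delta$,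 $p_{n,\alpha}$ depends only on variables $x_{l,k}$ with $l<n$; and for all $n,m\in\omega$ and all limit $\alpha\le\delta$ there is $k_0$ such that for every assignment $a$, $p_{n,\alpha+m}\circ a=g_{\alpha,n,m,k}((p_{n+1,\zeta}\circ a)_{\zeta<\alpha})$ for all $k\ge k_0$ (computed from $\tilde p$). For $p\in R$, $\sigma(p)=(p_{n,m})_{n,m\in\omega}$. Stacking: for $p\in R_{\delta+\omega}$ and $q'\in R_{\delta'+\omega}$, $q=p\Lsh q'\in R_{\delta+\delta'+\omega}$ is defined by: $\tilde q$ agrees with $\tilde p$ on all limit indices $\le\delta$; for limit $\alpha$ with $\omega\le\alpha\le\delta'$, $\nu^q_{\delta+\alpha,n,m}=\{\delta+\beta:\beta\in\nu^{q'}_{\alpha,n,m}\}$, $j^q_{\delta+\alpha,n,m}=j^{q'}_{\alpha,n,m}$, $f^q_{\delta+\alpha,n,m,k}=f^{q'}_{\alpha,n,m,k}$; $q_{n,\delta+\alpha}=q'_{n,\alpha}$ for $\alpha<\delta'+\omega$; and $q_{n,\alpha}=p_{n,\alpha}\circ\phi$ for $\alpha<\delta$, where $\phi(x_{n,m})=q'_{n,m}$. *)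

theory Defs
  imports Main "HOL-Library.Countable_Set"
begin

section \<open>Terms (identified with their semantics, i.e. modulo =*)\<close>

type_synonym var = "nat \<times> nat"          \<comment> \<open>x_{l,k} is (l,k)\<close>
type_synonym assign = "var \<Rightarrow> bool"
type_synonym trm = "assign \<Rightarrow> bool"

text \<open>A term is a function of finitely many variables (a finite variable list and F : 2^r -> 2).\<close>
definition is_term :: "trm \<Rightarrow> bool" where
  "is_term t \<longleftrightarrow> (\<exists>V. finite V \<and> (\<forall>a b. (\<forall>v\<in>V. a v = b v) \<longrightarrow> t a = t b))"

definition depends_only :: "trm \<Rightarrow> var set \<Rightarrow> bool" where
  "depends_only t Y \<longleftrightarrow> (\<exists>V. finite V \<and> V \<subseteq> Y \<and> (\<forall>a b. (\<forall>v\<in>V. a v = b v) \<longrightarrow> t a = t b))"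

definition subst :: "trm \<Rightarrow> (var \<Rightarrow> trm) \<Rightarrow> trm" where
  "subst t \<phi> = (\<lambda>a. t (\<lambda>v. \<phi> v a))"

type_synonym square = "nat \<Rightarrow> nat \<Rightarrow> trm"

definition tau :: "nat \<Rightarrow> nat \<Rightarrow> nat" where
  "tau n m = n + (n + m) * (n + m + 1) div 2"

definition inQ :: "square \<Rightarrow> bool" where
  "inQ t \<longleftrightarrow>
     (\<forall>n m. is_term (t n m) \<and> depends_only (t n m) {(i, j). tau i j \<le> tau n m}) \<and>
     (\<forall>i j. \<exists>S. finite S \<and>
        (\<forall>a b. (\<forall>(n, m)\<in>S. t n m a = t n m b) \<longrightarrow> a (i, j) = b (i, j)))"

definition sq_subst :: "square \<Rightarrow> square \<Rightarrow> square" where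
  "sq_subst t \<phi> = (\<lambda>n m. subst (t n m) (\<lambda>(i, j). \<phi> i j))"

section \<open>Ordinals as well-orders (BNF-style relations)\<close>

definition lt :: "'p rel \<Rightarrow> 'p \<Rightarrow> 'p \<Rightarrow> bool" where
  "lt W x y \<longleftrightarrow> (x, y) \<in> W \<and> x \<noteq> y"

definition is_limit_pt :: "'p rel \<Rightarrow> 'p \<Rightarrow> bool" where
  "is_limit_pt W x \<longleftrightarrow> x \<in> Field W \<and> (\<exists>y. lt W y x) \<and>
     (\<forall>y. lt W y x \<longrightarrow> (\<exists>z. lt W y z \<and> lt W z x))"

definition ord_plus :: "'p rel \<Rightarrow> 'p \<Rightarrow> nat \<Rightarrow> 'p" where
  "ord_plus W x m = (THE y. y \<in> Field W \<and> (x, y) \<in> W \<and>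
       finite {z. (x, z) \<in> W \<and> lt W z y} \<and> card {z. (x, z) \<in> W \<and> lt W z y} = m)"

definition ord_nth :: "'p rel \<Rightarrow> nat \<Rightarrow> 'p" where
  "ord_nth W m = (THE y. y \<in> Field W \<and> finite {z. lt W z y} \<and> card {z. lt W z y} = m)"

definition nz_countable_limit :: "'a rel \<Rightarrow> bool" where
  "nz_countable_limit r \<longleftrightarrow> Well_order r \<and> countable (Field r) \<and> Field r \<noteq> {} \<and>
     (\<forall>x\<in>Field r. \<exists>y. lt r x y)"

definition osum :: "'a rel \<Rightarrow> 'b rel \<Rightarrow> ('a + 'b) rel" where
  "osum r s = map_prod Inl Inl ` r \<union> map_prod Inr Inr ` s \<union> (Inl ` Field r) \<times> (Inr ` Field s)"

definition nat_le :: "nat rel" where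
  "nat_le = {(x, y). x \<le> y}"

text \<open>delta + omega; positions Inl alpha = alpha < delta, Inr m = delta + m\<close>
definition plus_omega :: "'a rel \<Rightarrow> ('a + nat) rel" where
  "plus_omega r = osum r nat_le"

text \<open>omega * omega, as the lexicographic order on nat x nat\<close>
definition oo :: "(nat \<times> nat) rel" where
  "oo = {((a, b), (c, d)). a < c \<or> (a = c \<and> b \<le> d)}"

text \<open>nu_{lambda,n,m} is given by its increasing enumeration (i -> zeta_i);
  functions f : 2^[j(k), j(k+1)-1] -> 2 are given extensionally as maps on nat => bool
  that only look at the indices in that interval.\<close>
record 'p cond =
  nu :: "'p \<Rightarrow> nat \<Rightarrow> nat \<Rightarrow> nat \<Rightarrow> 'p"
  jj :: "'p \<Rightarrow> nat \<Rightarrow> nat \<Rightarrow> nat \<Rightarrow> nat"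
  ff :: "'p \<Rightarrow> nat \<Rightarrow> nat \<Rightarrow> nat \<Rightarrow> (nat \<Rightarrow> bool) \<Rightarrow> bool"
  tm :: "nat \<Rightarrow> 'p \<Rightarrow> trm"

definition tilde_ok :: "'p rel \<Rightarrow> ('p, 'z) cond_scheme \<Rightarrow> bool" where
  "tilde_ok W c \<longleftrightarrow> (\<forall>l. is_limit_pt W l \<longrightarrow>
     (\<forall>n m.
        (\<forall>i. lt W (nu c l n m i) l) \<and>
        (\<forall>i. lt W (nu c l n m i) (nu c l n m (Suc i))) \<and>
        (\<forall>b. lt W b l \<longrightarrow> (\<exists>i. (b, nu c l n m i) \<in> W)) \<and>
        strict_mono (jj c l n m) \<and>
        (\<forall>k. (\<forall>\<eta> \<eta>'. (\<forall>i. jj c l n m k \<le> i \<and> i \<le> jj c l n m (Suc k) - 1 \<longrightarrow> \<eta> i = \<eta>' i)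
                 \<longrightarrow> ff c l n m k \<eta> = ff c l n m k \<eta>') \<and>
             (\<exists>\<eta>. ff c l n m k \<eta>) \<and> (\<exists>\<eta>. \<not> ff c l n m k \<eta>))) \<and>
     (\<forall>n m1 m2. m1 \<noteq> m2 \<longrightarrow> range (nu c l n m1) \<inter> range (nu c l n m2) = {}))"

definition gfun :: "('p, 'z) cond_scheme \<Rightarrow> 'p \<Rightarrow> nat \<Rightarrow> nat \<Rightarrow> nat \<Rightarrow> ('p \<Rightarrow> bool) \<Rightarrow> bool" where
  "gfun c l n m k \<eta> = ff c l n m k (\<lambda>i. \<eta> (nu c l n m i))"

definition inR :: "'a rel \<Rightarrow> ('a + nat) cond \<Rightarrow> bool" where
  "inR r p \<longleftrightarrow> nz_countable_limit r \<and> tilde_ok (plus_omega r) p \<and>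
     (\<forall>n \<alpha>. \<alpha> \<in> Field (plus_omega r) \<longrightarrow> is_term (tm p n \<alpha>)) \<and>
     (\<forall>n m. tm p n (Inr m) = (\<lambda>a. a (n, m))) \<and>
     (\<forall>n \<alpha>. \<alpha> \<in> Field r \<longrightarrow> depends_only (tm p n (Inl \<alpha>)) {(l, k). l < n}) \<and>
     (\<forall>n m l. is_limit_pt (plus_omega r) l \<longrightarrow>
        (\<exists>k0. \<forall>a k. k0 \<le> k \<longrightarrow>
           tm p n (ord_plus (plus_omega r) l m) a = gfun p l n m k (\<lambda>\<zeta>. tm p (Suc n) \<zeta> a)))"

definition sigma :: "'a rel \<Rightarrow> ('a + nat) cond \<Rightarrow> square" where
  "sigma r p = (\<lambda>n m. tm p n (Inl (ord_nth r m)))"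

definition emb1 :: "'b rel \<Rightarrow> 'a + nat \<Rightarrow> ('a + 'b) + nat" where
  "emb1 s x = (case x of Inl \<alpha> \<Rightarrow> Inl (Inl \<alpha>) | Inr m \<Rightarrow> Inl (Inr (ord_nth s m)))"

definition emb2 :: "'b + nat \<Rightarrow> ('a + 'b) + nat" where
  "emb2 x = (case x of Inl \<beta> \<Rightarrow> Inl (Inr \<beta>) | Inr m \<Rightarrow> Inr m)"

definition stack :: "'a rel \<Rightarrow> 'b rel \<Rightarrow> ('a + nat) cond \<Rightarrow> ('b + nat) cond \<Rightarrow> (('a + 'b) + nat) cond" where
  "stack r s p q =
    (let L1 = {l. is_limit_pt (plus_omega r) l}; L2 = {l. is_limit_pt (plus_omega s) l};
         back1 = inv_into L1 (emb1 s); back2 = inv_into L2 emb2 in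
     \<lparr> nu = (\<lambda>l n m i. if l \<in> emb1 s ` L1 then emb1 s (nu p (back1 l) n m i)
                       else if l \<in> emb2 ` L2 then emb2 (nu q (back2 l) n m i) else undefined),
       jj = (\<lambda>l n m. if l \<in> emb1 s ` L1 then jj p (back1 l) n m
                       else if l \<in> emb2 ` L2 then jj q (back2 l) n m else undefined),
       ff = (\<lambda>l n m k. if l \<in> emb1 s ` L1 then ff p (back1 l) n m k
                       else if l \<in> emb2 ` L2 then ff q (back2 l) n m k else undefined),
       tm = (\<lambda>n x. case x of
                Inl (Inl \<alpha>) \<Rightarrow> subst (tm p n (Inl \<alpha>)) (\<lambda>(n', m'). tm q n' (Inl (ord_nth s m')))
              | Inl (Inr \<beta>) \<Rightarrow> tm q n (Inl \<beta>)
              | Inr m \<Rightarrow> tm q n (Inr m)) \<rparr>)"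

end

theory Submission
  imports Defs "HOL-Library.Nat_Bijection"
begin

lemma osum_simps[simp]:
  "(Inl a, Inl b) \<in> osum r s \<longleftrightarrow> (a,b) \<in> r"
  "(Inl a, Inr c) \<in> osum r s \<longleftrightarrow> a \<in> Field r \<and> c \<in> Field s"
  "(Inr c, Inl a) \<notin> osum r s"
  "(Inr c, Inr d) \<in> osum r s \<longleftrightarrow> (c,d) \<in> s"
  unfolding osum_def by auto

lemma Field_osum: "Field (osum r s) = Inl ` Field r \<union> Inr ` Field s"
proof
  show "Field (osum r s) \<subseteq> Inl ` Field r \<union> Inr ` Field s"
    unfolding osum_def Field_def by auto
  show "Inl ` Field r \<union> Inr ` Field s \<subseteq> Field (osum r s)"
  proof
    fix x assume "x \<in> Inl ` Field r \<union> Inr ` Field s"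
    then show "x \<in> Field (osum r s)"
    proof
      assume "x \<in> Inl ` Field r"
      then obtain a where a: "x = Inl a" "a \<in> Field r" by auto
      then obtain b where "(a,b) \<in> r \<or> (b,a) \<in> r" unfolding Field_def by auto
      then show ?thesis using a by (metis FieldI1 FieldI2 osum_simps(1))
    next
      assume "x \<in> Inr ` Field s"
      then obtain a where a: "x = Inr a" "a \<in> Field s" by auto
      then obtain b where "(a,b) \<in> s \<or> (b,a) \<in> s" unfolding Field_def by auto
      then show ?thesis using a by (metis FieldI1 FieldI2 osum_simps(4))
    qed
  qed
qed

lemma Inl_Field_osum[simp]: "Inl a \<in> Field (osum r s) \<longleftrightarrow> a \<in> Field r"
  and Inr_Field_osum[simp]: "Inr c \<in> Field (osum r s) \<longleftrightarrow> c \<in> Field s"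
  by (auto simp: Field_osum)

lemma wo_osum:
  assumes r: "Well_order r" and s: "Well_order s"
  shows "Well_order (osum r s)"
proof -
  have rr: "refl_on (Field r) r" "trans r" "antisym r" "total_on (Field r) r"
    using r unfolding order_on_defs by auto
  have ss: "refl_on (Field s) s" "trans s" "antisym s" "total_on (Field s) s"
    using s unfolding order_on_defs by auto
  have lin: "Linear_order (osum r s)"
    unfolding order_on_defs
  proof (intro conjI)
    show "osum r s \<subseteq> Field (osum r s) \<times> Field (osum r s)"
      by (auto intro: FieldI1 FieldI2)
    show "refl_on (Field (osum r s)) (osum r s)"
      using rr(1) ss(1) unfolding refl_on_def by (auto simp: Field_osum)
    show "trans (osum r s)"
      unfolding trans_def
    proof (intro allI impI)
      fix x y z assume a: "(x,y) \<in> osum r s" "(y,z) \<in> osum r s"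
      show "(x,z) \<in> osum r s"
        using a rr(2) ss(2)
        by (cases x; cases y; cases z; auto intro: FieldI1 FieldI2 dest: transD)
    qed
    show "antisym (osum r s)"
      unfolding antisym_def
    proof (intro allI impI)
      fix x y assume a: "(x,y) \<in> osum r s" "(y,x) \<in> osum r s"
      show "x = y" using a rr(3) ss(3)
        by (cases x; cases y; auto dest: antisymD)
    qed
    show "total_on (Field (osum r s)) (osum r s)"
      unfolding total_on_def
    proof (intro ballI impI)
      fix x y assume a: "x \<in> Field (osum r s)" "y \<in> Field (osum r s)" "x \<noteq> y"
      show "(x, y) \<in> osum r s \<or> (y, x) \<in> osum r s" using a rr(4) ss(4)
        by (cases x; cases y; auto simp: total_on_def)
    qed
  qed
  have wr: "\<forall>A \<subseteq> Field r. A \<noteq> {} \<longrightarrow> (\<exists>a \<in> A. \<forall>a' \<in> A. (a, a') \<in> r)"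
    using r Linear_order_Well_order_iff[of r] unfolding well_order_on_def by blast
  have ws: "\<forall>A \<subseteq> Field s. A \<noteq> {} \<longrightarrow> (\<exists>a \<in> A. \<forall>a' \<in> A. (a, a') \<in> s)"
    using s Linear_order_Well_order_iff[of s] unfolding well_order_on_def by blast
  have "\<forall>A \<subseteq> Field (osum r s). A \<noteq> {} \<longrightarrow> (\<exists>a \<in> A. \<forall>a' \<in> A. (a, a') \<in> osum r s)"
  proof (intro allI impI)
    fix A assume A: "A \<subseteq> Field (osum r s)" "A \<noteq> {}"
    show "\<exists>a \<in> A. \<forall>a' \<in> A. (a, a') \<in> osum r s"
    proof (cases "{a. Inl a \<in> A} = {}")
      case False
      have "{a. Inl a \<in> A} \<subseteq> Field r" using A(1) by auto
      then obtain a where a: "Inl a \<in> A" "\<forall>a'\<in>{a. Inl a \<in> A}. (a,a') \<in> r"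
        using wr False by blast
      have "\<forall>x\<in>A. (Inl a, x) \<in> osum r s"
      proof
        fix x assume "x \<in> A" then show "(Inl a, x) \<in> osum r s"
          using a A(1) by (cases x) (auto simp: subset_eq)
      qed
      then show ?thesis using a by blast
    next
      case True
      have "{a. Inr a \<in> A} \<subseteq> Field s" using A(1) by auto
      moreover have ne: "{a. Inr a \<in> A} \<noteq> {}"
      proof -
        obtain x where "x \<in> A" using A(2) by auto
        then show ?thesis using True by (cases x) auto
      qed
      ultimately obtain a where a: "Inr a \<in> A" "\<forall>a'\<in>{a. Inr a \<in> A}. (a,a') \<in> s"
        using ws by blast
      have "\<forall>x\<in>A. (Inr a, x) \<in> osum r s"
      proof
        fix x assume "x \<in> A" then show "(Inr a, x) \<in> osum r s"
          using a True by (cases x) auto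
      qed
      then show ?thesis using a by blast
    qed
  qed
  then show ?thesis using lin Linear_order_Well_order_iff by blast
qed

lemma wo_nat_le: "Well_order nat_le"
proof -
  have F: "Field nat_le = UNIV" unfolding nat_le_def Field_def by auto
  have lin: "Linear_order nat_le"
    unfolding order_on_defs F by (auto simp: nat_le_def refl_on_def trans_def antisym_def total_on_def)
  have "nat_le - Id = {(x,y). x < y}" unfolding nat_le_def by auto
  moreover have "{(x::nat,y). x < y} = less_than" by auto
  ultimately have "nat_le - Id = less_than" by simp
  then show ?thesis using lin wf_less_than unfolding well_order_on_def by simp
qed

lemma Field_nat_le[simp]: "Field nat_le = UNIV" unfolding nat_le_def Field_def by auto
lemma Field_oo[simp]: "Field oo = UNIV" unfolding oo_def Field_def by auto

lemma wo_oo: "Well_order oo"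
proof -
  have lin: "Linear_order oo"
    unfolding order_on_defs Field_oo by (auto simp: oo_def refl_on_def trans_def antisym_def total_on_def)
  have "oo - Id = less_than <*lex*> less_than" unfolding oo_def by auto
  then have "wf (oo - Id)" by (simp add: wf_lex_prod)
  then show ?thesis using lin unfolding well_order_on_def by simp
qed

lemma wo_facts:
  assumes "Well_order W"
  shows "refl_on (Field W) W" "trans W" "antisym W" "total_on (Field W) W" "wf (W - Id)"
  using assms unfolding order_on_defs by auto

lemma wo_min:
  assumes "Well_order W" "A \<subseteq> Field W" "A \<noteq> {}"
  shows "\<exists>a\<in>A. \<forall>a'\<in>A. (a, a') \<in> W"
  using assms Linear_order_Well_order_iff[of W] unfolding well_order_on_def by blast

lemma lt_Field: "lt W x y \<Longrightarrow> x \<in> Field W \<and> y \<in> Field W"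
  unfolding lt_def by (auto intro: FieldI1 FieldI2)

lemma lt_asym:
  assumes W: "Well_order W" and l: "lt W x y" and b: "(y, x) \<in> W" shows False
proof -
  have "antisym W" using wo_facts(3)[OF W] .
  moreover have "(x, y) \<in> W" "x \<noteq> y" using l unfolding lt_def by auto
  ultimately show False using b antisymD by metis
qed

lemma lt_le_trans:
  assumes W: "Well_order W" and l: "lt W x y" and b: "(y, z) \<in> W" shows "lt W x z"
proof -
  have xy: "(x, y) \<in> W" using l unfolding lt_def by auto
  have "(x, z) \<in> W" using xy b wo_facts(2)[OF W] transD by metis
  moreover have "x \<noteq> z"
  proof
    assume "x = z"
    then have "(y, x) \<in> W" using b by simp
    then show False using lt_asym[OF W l] by simp
  qed
  ultimately show ?thesis unfolding lt_def by simp
qed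

lemma le_lt_trans:
  assumes W: "Well_order W" and a: "(x, y) \<in> W" and l: "lt W y z" shows "lt W x z"
proof -
  have yz: "(y, z) \<in> W" using l unfolding lt_def by auto
  have "(x, z) \<in> W" using a yz wo_facts(2)[OF W] transD by metis
  moreover have "x \<noteq> z"
  proof
    assume "x = z"
    then have "(z, y) \<in> W" using a by simp
    then show False using lt_asym[OF W l] by simp
  qed
  ultimately show ?thesis unfolding lt_def by simp
qed

lemma lt_trans:
  assumes W: "Well_order W" and "lt W x y" "lt W y z" shows "lt W x z"
proof -
  have "(y, z) \<in> W" using assms(3) unfolding lt_def by simp
  then show ?thesis using lt_le_trans[OF W assms(2)] by simp
qed

lemma lt_total:
  assumes W: "Well_order W" and "x \<in> Field W" "y \<in> Field W"
  shows "lt W x y \<or> x = y \<or> lt W y x"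
proof -
  have "total_on (Field W) W" using wo_facts(4)[OF W] .
  then show ?thesis using assms(2,3) unfolding lt_def total_on_def by blast
qed

lemma le_refl: "Well_order W \<Longrightarrow> x \<in> Field W \<Longrightarrow> (x, x) \<in> W"
  using wo_facts(1) unfolding refl_on_def by blast

lemma card_pred_unique_aux:
  assumes W: "Well_order W" and y: "y1 \<in> A" and l: "lt W y1 y2"
  and f: "finite {z\<in>A. lt W z y2}"
  shows "card {z\<in>A. lt W z y1} < card {z\<in>A. lt W z y2}"
proof -
  have "{z\<in>A. lt W z y1} \<subset> {z\<in>A. lt W z y2}"
  proof
    show "{z\<in>A. lt W z y1} \<subseteq> {z\<in>A. lt W z y2}" using lt_trans[OF W] l by blast
    show "{z\<in>A. lt W z y1} \<noteq> {z\<in>A. lt W z y2}" using y l unfolding lt_def by blast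
  qed
  then show ?thesis using f psubset_card_mono by blast
qed

lemma card_pred_unique:
  assumes W: "Well_order W" and y: "y1 \<in> Field W" "y2 \<in> Field W" "y1 \<in> A" "y2 \<in> A"
  and f: "finite {z\<in>A. lt W z y1}" "finite {z\<in>A. lt W z y2}"
  and c: "card {z\<in>A. lt W z y1} = card {z\<in>A. lt W z y2}"
  shows "y1 = y2"
proof (rule ccontr)
  assume ne: "y1 \<noteq> y2"
  then have "lt W y1 y2 \<or> lt W y2 y1" using lt_total[OF W y(1,2)] by blast
  then show False
  proof
    assume "lt W y1 y2"
    from card_pred_unique_aux[OF W y(3) this f(2)] c show False by simp
  next
    assume "lt W y2 y1"
    from card_pred_unique_aux[OF W y(4) this f(1)] c show False by simp
  qed
qed

lemma ord_nth_eq: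
  assumes W: "Well_order W" and y: "y \<in> Field W" and f: "finite {z. lt W z y}"
  and c: "card {z. lt W z y} = m"
  shows "ord_nth W m = y"
  unfolding ord_nth_def
proof (rule the_equality)
  show "y \<in> Field W \<and> finite {z. lt W z y} \<and> card {z. lt W z y} = m" using assms by simp
  fix y' assume a: "y' \<in> Field W \<and> finite {z. lt W z y'} \<and> card {z. lt W z y'} = m"
  show "y' = y" using card_pred_unique[OF W, of y' y UNIV] a y f c by simp
qed

lemma ord_plus_eq:
  assumes W: "Well_order W" and y: "y \<in> Field W" "(l, y) \<in> W"
  and f: "finite {z. (l, z) \<in> W \<and> lt W z y}"
  and c: "card {z. (l, z) \<in> W \<and> lt W z y} = m"
  shows "ord_plus W l m = y"
  unfolding ord_plus_def
proof (rule the_equality)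
  show "y \<in> Field W \<and> (l, y) \<in> W \<and> finite {z. (l, z) \<in> W \<and> lt W z y} \<and> card {z. (l, z) \<in> W \<and> lt W z y} = m"
    using assms by simp
  fix y' assume a: "y' \<in> Field W \<and> (l, y') \<in> W \<and> finite {z. (l, z) \<in> W \<and> lt W z y'} \<and> card {z. (l, z) \<in> W \<and> lt W z y'} = m"
  show "y' = y" using card_pred_unique[OF W, of y' y "{z. (l, z) \<in> W}"] a y f c by simp
qed

lemma nth_exists:
  assumes W: "Well_order W" and ne: "Field W \<noteq> {}" and nm: "\<forall>x\<in>Field W. \<exists>y. lt W x y"
  shows "\<exists>y\<in>Field W. finite {z. lt W z y} \<and> card {z. lt W z y} = m"
proof (induction m)
  case 0
  obtain a where a: "a \<in> Field W" "\<forall>a'\<in>Field W. (a, a') \<in> W" using wo_min[OF W subset_refl ne] by blast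
  have "{z. lt W z a} = {}"
  proof (rule ccontr)
    assume "{z. lt W z a} \<noteq> {}"
    then obtain z where z: "lt W z a" by blast
    then have "z \<in> Field W" using lt_Field by metis
    then have "(a, z) \<in> W" using a by blast
    then show False using lt_asym[OF W z] by blast
  qed
  then have "finite {z. lt W z a} \<and> card {z. lt W z a} = 0" by simp
  then show ?case using a(1) by blast
next
  case (Suc m)
  then obtain y where y: "y \<in> Field W" "finite {z. lt W z y}" "card {z. lt W z y} = m" by blast
  have A1: "{z. lt W y z} \<subseteq> Field W"
  proof
    fix z assume "z \<in> {z. lt W y z}" then show "z \<in> Field W" using lt_Field by (metis mem_Collect_eq)
  qed
  obtain y0 where "lt W y y0" using nm y(1) by blast
  then have A2: "{z. lt W y z} \<noteq> {}" by blast
  obtain y' where y': "y' \<in> {z. lt W y z}" "\<forall>a'\<in>{z. lt W y z}. (y', a') \<in> W"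
    using wo_min[OF W A1 A2] by blast
  have yy': "lt W y y'" using y'(1) by simp
  have eq: "{z. lt W z y'} = insert y {z. lt W z y}"
  proof
    show "{z. lt W z y'} \<subseteq> insert y {z. lt W z y}"
    proof
      fix z assume z: "z \<in> {z. lt W z y'}"
      then have zf: "z \<in> Field W" using lt_Field by (metis mem_Collect_eq)
      have "lt W z y \<or> z = y \<or> lt W y z" using lt_total[OF W zf y(1)] .
      then show "z \<in> insert y {z. lt W z y}"
      proof (elim disjE)
        assume "lt W y z"
        then have "(y', z) \<in> W" using y'(2) by blast
        moreover have "lt W z y'" using z by simp
        ultimately show ?thesis using lt_asym[OF W] by blast
      qed simp_all
    qed
    show "insert y {z. lt W z y} \<subseteq> {z. lt W z y'}"
    proof
      fix z assume "z \<in> insert y {z. lt W z y}"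
      then show "z \<in> {z. lt W z y'}" using yy' lt_trans[OF W] by blast
    qed
  qed
  have "y \<notin> {z. lt W z y}" unfolding lt_def by simp
  then have "finite {z. lt W z y'} \<and> card {z. lt W z y'} = Suc m" using eq y by simp
  moreover have "y' \<in> Field W" using yy' lt_Field by metis
  ultimately show ?case by blast
qed

lemma field_infinite:
  assumes W: "Well_order W" and ne: "Field W \<noteq> {}" and nm: "\<forall>x\<in>Field W. \<exists>y. lt W x y"
  shows "infinite (Field W)"
proof
  assume fin: "finite (Field W)"
  define f where "f m = (SOME y. y\<in>Field W \<and> finite {z. lt W z y} \<and> card {z. lt W z y} = m)" for m
  have f: "f m \<in> Field W \<and> finite {z. lt W z (f m)} \<and> card {z. lt W z (f m)} = m" for m
  proof -
    have "\<exists>y. y\<in>Field W \<and> finite {z. lt W z y} \<and> card {z. lt W z y} = m"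
      using nth_exists[OF assms, of m] by blast
    then show ?thesis unfolding f_def by (rule someI_ex)
  qed
  have "inj f"
  proof (rule injI)
    fix a b assume "f a = f b"
    then have "card {z. lt W z (f a)} = card {z. lt W z (f b)}" by simp
    then show "a = b" using f[of a] f[of b] by simp
  qed
  moreover have "range f \<subseteq> Field W" using f by blast
  then have "finite (range f)" using fin finite_subset by blast
  ultimately have "finite (UNIV :: nat set)" using finite_imageD by blast
  then show False by simp
qed

lemma tau_pe: "tau n m = prod_encode (n, m)"
  by (simp add: tau_def prod_encode_def triangle_def)

lemma mem_oo[simp]: "(((a::nat), (b::nat)), (c, d)) \<in> oo \<longleftrightarrow> a < c \<or> (a = c \<and> b \<le> d)"
  unfolding oo_def by simp

lemma mem_nat_le[simp]: "(i, j) \<in> nat_le \<longleftrightarrow> i \<le> j"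
  unfolding nat_le_def by simp

lemma lt_oo[simp]: "lt oo (a, b) (c, d) \<longleftrightarrow> a < c \<or> (a = c \<and> b < d)"
  unfolding lt_def by auto

lemma lt_nat_le[simp]: "lt nat_le i j \<longleftrightarrow> i < j"
  unfolding lt_def by auto

lemma lt_osum[simp]:
  "lt (osum r s) (Inl a) (Inl b) \<longleftrightarrow> lt r a b"
  "lt (osum r s) (Inl a) (Inr c) \<longleftrightarrow> a \<in> Field r \<and> c \<in> Field s"
  "\<not> lt (osum r s) (Inr c) (Inl a)"
  "lt (osum r s) (Inr c) (Inr d) \<longleftrightarrow> lt s c d"
  unfolding lt_def by auto

lemma Field_W0[simp]: "Field (plus_omega oo) = UNIV"
proof (rule set_eqI)
  fix x :: "(nat \<times> nat) + nat"
  show "x \<in> Field (plus_omega oo) \<longleftrightarrow> x \<in> UNIV"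
    unfolding plus_omega_def Field_osum by (cases x) auto
qed

lemma wo_W0: "Well_order (plus_omega oo)"
  unfolding plus_omega_def by (rule wo_osum[OF wo_oo wo_nat_le])

lemma wo_plus_omega: "Well_order r \<Longrightarrow> Well_order (plus_omega r)"
  unfolding plus_omega_def by (rule wo_osum[OF _ wo_nat_le])

lemma ord_nth_oo[simp]: "ord_nth oo m = (0, m)"
proof (rule ord_nth_eq[OF wo_oo])
  have e: "{z. lt oo z (0, m)} = (\<lambda>j. (0, j)) ` {..<m}"
  proof (rule set_eqI)
    fix z :: "nat \<times> nat" show "z \<in> {z. lt oo z (0, m)} \<longleftrightarrow> z \<in> (\<lambda>j. (0, j)) ` {..<m}"
      by (cases z) auto
  qed
  show "finite {z. lt oo z (0, m)}" unfolding e by simp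
  show "card {z. lt oo z (0, m)} = m" unfolding e by (simp add: card_image inj_on_def)
qed simp

lemma limit_W0:
  assumes "is_limit_pt (plus_omega oo) l"
  shows "l = Inr 0 \<or> (\<exists>a. l = Inl (Suc a, 0))"
proof (cases l)
  case (Inl p)
  obtain a b where p: "p = (a, b)" by fastforce
  show ?thesis
  proof (cases b)
    case 0
    show ?thesis
    proof (cases a)
      case 0
      obtain y where "lt (plus_omega oo) y l" using assms unfolding is_limit_pt_def by blast
      then show ?thesis using Inl p \<open>b = 0\<close> 0
        unfolding plus_omega_def by (cases y) auto
    qed (use Inl p 0 in auto)
  next
    case (Suc b')
    have "lt (plus_omega oo) (Inl (a, b')) l" using Inl p Suc unfolding plus_omega_def by simp
    then obtain z where z: "lt (plus_omega oo) (Inl (a, b')) z" "lt (plus_omega oo) z l"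
      using assms unfolding is_limit_pt_def by blast
    show ?thesis
    proof (cases z)
      case (Inl q)
      then show ?thesis using z Inl p Suc \<open>l = Inl p\<close> unfolding plus_omega_def
        by (cases q) auto
    next
      case (Inr k)
      then show ?thesis using z \<open>l = Inl p\<close> unfolding plus_omega_def by simp
    qed
  qed
next
  case (Inr j)
  show ?thesis
  proof (cases j)
    case (Suc j')
    have "lt (plus_omega oo) (Inr j') l" using Inr Suc unfolding plus_omega_def by simp
    then obtain z where z: "lt (plus_omega oo) (Inr j') z" "lt (plus_omega oo) z l"
      using assms unfolding is_limit_pt_def by blast
    show ?thesis
    proof (cases z)
      case (Inl q)
      then show ?thesis using z unfolding plus_omega_def by simp
    next
      case (Inr k)
      then show ?thesis using z Inr Suc \<open>l = Inr j\<close> unfolding plus_omega_def by simp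
    qed
  qed (use Inr in simp)
qed

lemma ord_plus_W0_Inl[simp]: "ord_plus (plus_omega oo) (Inl (a, 0)) m = Inl (a, m)"
proof (rule ord_plus_eq[OF wo_W0])
  let ?S = "{z. (Inl (a, 0), z) \<in> plus_omega oo \<and> lt (plus_omega oo) z (Inl (a, m))}"
  have e: "?S = (\<lambda>j. Inl (a, j)) ` {..<m}"
  proof (rule set_eqI)
    fix z :: "(nat \<times> nat) + nat"
    show "z \<in> ?S \<longleftrightarrow> z \<in> (\<lambda>j. Inl (a, j)) ` {..<m}"
    proof (cases z)
      case (Inl q) then show ?thesis unfolding plus_omega_def by (cases q) auto
    next
      case (Inr k) then show ?thesis unfolding plus_omega_def by auto
    qed
  qed
  show "finite ?S" unfolding e by simp
  show "card ?S = m" unfolding e by (simp add: card_image inj_on_def)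
  show "(Inl (a, 0), Inl (a, m)) \<in> plus_omega oo" unfolding plus_omega_def by simp
qed simp

lemma ord_plus_W0_Inr[simp]: "ord_plus (plus_omega oo) (Inr 0) m = Inr m"
proof (rule ord_plus_eq[OF wo_W0])
  let ?S = "{z. (Inr 0, z) \<in> plus_omega oo \<and> lt (plus_omega oo) z (Inr m)}"
  have e: "?S = Inr ` {..<m}"
  proof (rule set_eqI)
    fix z :: "(nat \<times> nat) + nat"
    show "z \<in> ?S \<longleftrightarrow> z \<in> Inr ` {..<m}"
      unfolding plus_omega_def by (cases z) auto
  qed
  show "finite ?S" unfolding e by simp
  show "card ?S = m" unfolding e by (simp add: card_image)
  show "(Inr 0, Inr m) \<in> plus_omega oo" unfolding plus_omega_def by simp
qed simp

lemma depends_only_const: "depends_only (\<lambda>_. c) Y"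
  unfolding depends_only_def by (rule exI[of _ "{}"]) simp

lemma depends_only_var: "v \<in> Y \<Longrightarrow> depends_only (\<lambda>a. a v) Y"
  unfolding depends_only_def by (rule exI[of _ "{v}"]) simp

lemma depends_only_mono: "depends_only t Y \<Longrightarrow> Y \<subseteq> Z \<Longrightarrow> depends_only t Z"
  unfolding depends_only_def by blast

lemma depends_only_is_term: "depends_only t Y \<Longrightarrow> is_term t"
  unfolding depends_only_def is_term_def by blast

lemma is_term_var: "is_term (\<lambda>a. a v)"
  using depends_only_is_term[OF depends_only_var[of v UNIV]] by simp

lemma is_term_const: "is_term (\<lambda>_. c)"
  using depends_only_is_term[OF depends_only_const] by blast

lemma subst_var[simp]: "subst (\<lambda>a. a v) \<phi> = \<phi> v"
  unfolding subst_def by simp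

lemma subst_const[simp]: "subst (\<lambda>_. c) \<phi> = (\<lambda>_. c)"
  unfolding subst_def by simp

lemma tau_le: "i \<le> n \<Longrightarrow> i + j \<le> n + m \<Longrightarrow> tau i j \<le> tau n m"
proof -
  assume a: "i \<le> n" "i + j \<le> n + m"
  have "(i + j) * (i + j + 1) \<le> (n + m) * (n + m + 1)" using a(2) by (intro mult_le_mono) auto
  then have "(i + j) * (i + j + 1) div 2 \<le> (n + m) * (n + m + 1) div 2" by (rule div_le_mono)
  then show ?thesis using a(1) unfolding tau_def by simp
qed

lemma tau_row: "tau i j < tau n 0 \<Longrightarrow> i < n"
proof (rule ccontr)
  assume "tau i j < tau n 0" "\<not> i < n"
  then have "tau n 0 \<le> tau i j" by (intro tau_le) auto
  then show False using \<open>tau i j < tau n 0\<close> by simp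
qed

lemma tau_ge: "N \<le> tau N 0"
  unfolding tau_def by simp

lemma tau_decode[simp]: "tau (fst (prod_decode t)) (snd (prod_decode t)) = t"
  by (simp add: tau_pe)

lemma decode_tau[simp]: "prod_decode (tau i j) = (i, j)"
  by (simp add: tau_pe)

lemma tau_mono0: "i \<le> n \<Longrightarrow> tau i 0 \<le> tau n 0"
  by (rule tau_le) auto

lemma tau_row_le: "tau n 0 \<le> tau n m"
  by (rule tau_le) auto

lemma strict_mono_triangle: "strict_mono triangle"
  by (rule strict_mono_Suc_iff[THEN iffD2]) simp

lemma pe_strict2: "x < y \<Longrightarrow> prod_encode (m, x) < prod_encode (m, y)"
  using strict_mono_triangle unfolding prod_encode_def strict_mono_def by simp

section \<open>The construction\<close>

definition vals :: "square \<Rightarrow> nat \<Rightarrow> assign \<Rightarrow> nat \<Rightarrow> bool" where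
  "vals \<phi> N a = (\<lambda>t. if t < tau N 0 then \<phi> (fst (prod_decode t)) (snd (prod_decode t)) a else False)"

definition okv :: "square \<Rightarrow> nat \<Rightarrow> nat \<Rightarrow> nat \<Rightarrow> bool" where
  "okv \<phi> i c N \<longleftrightarrow> (\<exists>F. \<forall>a. a (i, c) = F (vals \<phi> N a))"

definition Mq :: square where
  "Mq n b = (case n of 0 \<Rightarrow> (\<lambda>_. False)
     | Suc _ \<Rightarrow> (if snd (prod_decode b) mod Suc (tau n 0) < tau n 0
                then (\<lambda>a. a (prod_decode (snd (prod_decode b) mod Suc (tau n 0)))) else (\<lambda>_. False)))"

definition hi :: "square \<Rightarrow> nat \<Rightarrow> nat \<Rightarrow> nat \<Rightarrow> trm" where
  "hi \<phi> n a b = (if fst (prod_decode (fst (prod_decode b))) < n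
        \<and> okv \<phi> (fst (prod_decode (fst (prod_decode b)))) (snd (prod_decode (fst (prod_decode b)))) (n + a)
      then (\<lambda>as. as (prod_decode (fst (prod_decode b)))) else (\<lambda>_. False))"

definition Fn :: "square \<Rightarrow> nat \<Rightarrow> nat \<Rightarrow> (nat \<Rightarrow> bool) \<Rightarrow> bool" where
  "Fn \<phi> n m = (SOME F. \<forall>as. hi \<phi> n 1 m as = F (vals \<phi> (Suc n) as))"

definition qn :: "nat \<Rightarrow> nat \<Rightarrow> nat" where
  "qn n m = (if fst (prod_decode (fst (prod_decode m))) < n then fst (prod_decode m) else prod_encode (Suc n, 0))"

definition Build :: "square \<Rightarrow> ((nat \<times> nat) + nat) cond" where
  "Build \<phi> = \<lparr> nu = (\<lambda>l n m i. case l of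
        Inl p \<Rightarrow> (if fst p = 1 then Inl (0, prod_encode (m, i))
                  else Inl (fst p - 1, prod_encode (qn n m, prod_encode (m, i))))
      | Inr _ \<Rightarrow> Inl (i, prod_encode (prod_encode (n, m), 0))),
     jj = (\<lambda>l n m. case l of
        Inl p \<Rightarrow> (if fst p = 1 then (\<lambda>k. k * Suc (tau (Suc n) 0)) else id)
      | Inr _ \<Rightarrow> id),
     ff = (\<lambda>l n m k \<eta>. case l of
        Inl p \<Rightarrow> (if fst p = 1 then
                   (Fn \<phi> n m (\<lambda>t. if t < tau (Suc n) 0 then \<eta> (k * Suc (tau (Suc n) 0) + t) else False)
                     \<noteq> \<eta> (k * Suc (tau (Suc n) 0) + tau (Suc n) 0))
                 else \<eta> k)
      | Inr _ \<Rightarrow> \<eta> k),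
     tm = (\<lambda>n x. case x of
        Inl p \<Rightarrow> (if fst p = 0 then subst (Mq n (snd p)) (\<lambda>(i, j). \<phi> i j) else hi \<phi> n (fst p) (snd p))
      | Inr m \<Rightarrow> (\<lambda>as. as (n, m))) \<rparr>"

lemma B_tm[simp]:
  "tm (Build \<phi>) n (Inl (0, b)) = subst (Mq n b) (\<lambda>(i, j). \<phi> i j)"
  "tm (Build \<phi>) n (Inl (Suc a, b)) = hi \<phi> n (Suc a) b"
  "tm (Build \<phi>) n (Inr m) = (\<lambda>as. as (n, m))"
  unfolding Build_def by simp_all

lemma B_nu[simp]:
  "nu (Build \<phi>) (Inl (Suc 0, 0)) n m i = Inl (0, prod_encode (m, i))"
  "nu (Build \<phi>) (Inl (Suc (Suc a), 0)) n m i = Inl (Suc a, prod_encode (qn n m, prod_encode (m, i)))"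
  "nu (Build \<phi>) (Inr 0) n m i = Inl (i, prod_encode (prod_encode (n, m), 0))"
  unfolding Build_def by simp_all

lemma B_jj[simp]:
  "jj (Build \<phi>) (Inl (Suc 0, 0)) n m = (\<lambda>k. k * Suc (tau (Suc n) 0))"
  "jj (Build \<phi>) (Inl (Suc (Suc a), 0)) n m = id"
  "jj (Build \<phi>) (Inr 0) n m = id"
  unfolding Build_def by simp_all

lemma B_ff[simp]:
  "ff (Build \<phi>) (Inl (Suc 0, 0)) n m k \<eta> =
     (Fn \<phi> n m (\<lambda>t. if t < tau (Suc n) 0 then \<eta> (k * Suc (tau (Suc n) 0) + t) else False)
        \<noteq> \<eta> (k * Suc (tau (Suc n) 0) + tau (Suc n) 0))"
  "ff (Build \<phi>) (Inl (Suc (Suc a), 0)) n m k \<eta> = \<eta> k"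
  "ff (Build \<phi>) (Inr 0) n m k \<eta> = \<eta> k"
  unfolding Build_def by simp_all

lemma W0_simps[simp]:
  "(Inl p, Inl q) \<in> plus_omega oo \<longleftrightarrow> (p, q) \<in> oo"
  "(Inl p, Inr c) \<in> plus_omega oo"
  "(Inr c, Inl p) \<notin> plus_omega oo"
  "(Inr c, Inr d) \<in> plus_omega oo \<longleftrightarrow> c \<le> d"
  "lt (plus_omega oo) (Inl p) (Inl q) \<longleftrightarrow> lt oo p q"
  "lt (plus_omega oo) (Inl p) (Inr c)"
  "\<not> lt (plus_omega oo) (Inr c) (Inl p)"
  "lt (plus_omega oo) (Inr c) (Inr d) \<longleftrightarrow> c < d"
  unfolding plus_omega_def by simp_all

abbreviation "W0 \<equiv> plus_omega oo"

definition tilde_at :: "'p rel \<Rightarrow> ('p, 'z) cond_scheme \<Rightarrow> 'p \<Rightarrow> bool" where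
  "tilde_at W c l \<longleftrightarrow>
     (\<forall>n m.
        (\<forall>i. lt W (nu c l n m i) l) \<and>
        (\<forall>i. lt W (nu c l n m i) (nu c l n m (Suc i))) \<and>
        (\<forall>b. lt W b l \<longrightarrow> (\<exists>i. (b, nu c l n m i) \<in> W)) \<and>
        strict_mono (jj c l n m) \<and>
        (\<forall>k. (\<forall>\<eta> \<eta>'. (\<forall>i. jj c l n m k \<le> i \<and> i \<le> jj c l n m (Suc k) - 1 \<longrightarrow> \<eta> i = \<eta>' i)
                 \<longrightarrow> ff c l n m k \<eta> = ff c l n m k \<eta>') \<and>
             (\<exists>\<eta>. ff c l n m k \<eta>) \<and> (\<exists>\<eta>. \<not> ff c l n m k \<eta>))) \<and>
     (\<forall>n m1 m2. m1 \<noteq> m2 \<longrightarrow> range (nu c l n m1) \<inter> range (nu c l n m2) = {})"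

lemma tilde_ok_at: "tilde_ok W c \<longleftrightarrow> (\<forall>l. is_limit_pt W l \<longrightarrow> tilde_at W c l)"
  unfolding tilde_ok_def tilde_at_def by (rule refl)


lemma tilde_omega:
  fixes \<phi> :: square
  defines "B \<equiv> Build \<phi>"
  shows "tilde_at W0 B (Inl (1,0))"
  unfolding tilde_at_def
proof (intro conjI allI impI)
  fix n m
  let ?T = "tau (Suc n) 0"
  show "lt W0 (nu B (Inl (1,0)) n m i) (Inl (1,0))" for i unfolding B_def by simp
  show "lt W0 (nu B (Inl (1,0)) n m i) (nu B (Inl (1,0)) n m (Suc i))" for i
    unfolding B_def by (simp add: pe_strict2)
  show "\<exists>i. (b, nu B (Inl (1,0)) n m i) \<in> W0" if "lt W0 b (Inl (1,0))" for b
  proof (cases b)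
    case (Inl p)
    obtain x y where p: "p = (x, y)" by fastforce
    then have "x = 0" using that Inl by simp
    then show ?thesis using Inl p le_prod_encode_2[of y m] unfolding B_def by (intro exI[of _ y]) simp
  next
    case (Inr c) then show ?thesis using that by simp
  qed
  show "strict_mono (jj B (Inl (1,0)) n m)" unfolding B_def by (auto simp: strict_mono_def intro!: add_less_le_mono mult_le_mono1)
  fix k
  show "ff B (Inl (1,0)) n m k \<eta> = ff B (Inl (1,0)) n m k \<eta>'"
    if h: "\<forall>i. jj B (Inl (1,0)) n m k \<le> i \<and> i \<le> jj B (Inl (1,0)) n m (Suc k) - 1 \<longrightarrow> \<eta> i = \<eta>' i" for \<eta> \<eta>'
  proof -
    have h': "\<eta> (k * Suc ?T + t) = \<eta>' (k * Suc ?T + t)" if "t \<le> ?T" for t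
      using h that unfolding B_def by simp
    have "(\<lambda>t. if t < ?T then \<eta> (k * Suc ?T + t) else False) = (\<lambda>t. if t < ?T then \<eta>' (k * Suc ?T + t) else False)"
      using h' by (auto intro!: ext)
    then show ?thesis unfolding B_def using h'[of ?T] by simp
  qed
  define X where "X = (\<lambda>_::nat. False)"
  define \<eta>1 where "\<eta>1 = (\<lambda>_::nat. False)"
  define \<eta>2 where "\<eta>2 = (\<lambda>_::nat. False)(k * Suc ?T + ?T := True)"
  have x1: "(\<lambda>t. if t < ?T then \<eta>1 (k * Suc ?T + t) else False) = X" unfolding \<eta>1_def X_def by simp
  have x2: "(\<lambda>t. if t < ?T then \<eta>2 (k * Suc ?T + t) else False) = X" unfolding \<eta>2_def X_def by (auto intro!: ext)
  have f1: "ff B (Inl (1,0)) n m k \<eta>1 = Fn \<phi> n m X" unfolding B_def using x1 by (simp add: \<eta>1_def X_def)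
  have f2: "ff B (Inl (1,0)) n m k \<eta>2 = (\<not> Fn \<phi> n m X)" unfolding B_def using x2 by (simp add: \<eta>2_def X_def)
  show "\<exists>\<eta>. ff B (Inl (1,0)) n m k \<eta>" using f1 f2 by (cases "Fn \<phi> n m X") blast+
  show "\<exists>\<eta>. \<not> ff B (Inl (1,0)) n m k \<eta>" using f1 f2 by (cases "Fn \<phi> n m X") blast+
next
  fix n m1 m2 :: nat assume "m1 \<noteq> m2"
  then show "range (nu B (Inl (1,0)) n m1) \<inter> range (nu B (Inl (1,0)) n m2) = {}"
    unfolding B_def by auto
qed

lemma tilde_succ:
  fixes \<phi> :: square and a :: nat
  defines "B \<equiv> Build \<phi>" and "L \<equiv> Inl (Suc (Suc a), 0)"
  shows "tilde_at W0 B L"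
  unfolding tilde_at_def
proof (intro conjI allI impI)
  fix n m
  show "lt W0 (nu B L n m i) L" for i unfolding B_def L_def by simp
  show "lt W0 (nu B L n m i) (nu B L n m (Suc i))" for i
    unfolding B_def L_def by (simp add: pe_strict2)
  show "\<exists>i. (b, nu B L n m i) \<in> W0" if "lt W0 b L" for b
  proof (cases b)
    case (Inl p)
    obtain x y where p: "p = (x, y)" by fastforce
    then have "x \<le> Suc a" using that Inl unfolding L_def by auto
    then show ?thesis
    proof (cases "x = Suc a")
      case True
      have "y \<le> prod_encode (m, y)" by (rule le_prod_encode_2)
      also have "\<dots> \<le> prod_encode (qn n m, prod_encode (m, y))" by (rule le_prod_encode_2)
      finally show ?thesis using Inl p True unfolding B_def L_def by (intro exI[of _ y]) simp
    next
      case False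
      then show ?thesis using Inl p \<open>x \<le> Suc a\<close> unfolding B_def L_def by (intro exI[of _ 0]) simp
    qed
  next
    case (Inr c) then show ?thesis using that unfolding L_def by simp
  qed
  show "strict_mono (jj B L n m)" unfolding B_def L_def by (simp add: strict_mono_def)
  fix k
  show "ff B L n m k \<eta> = ff B L n m k \<eta>'"
    if h: "\<forall>i. jj B L n m k \<le> i \<and> i \<le> jj B L n m (Suc k) - 1 \<longrightarrow> \<eta> i = \<eta>' i" for \<eta> \<eta>'
    using h[rule_format, of k] unfolding B_def L_def by simp
  show "\<exists>\<eta>. ff B L n m k \<eta>" unfolding B_def L_def by (intro exI[of _ "\<lambda>_. True"]) simp
  show "\<exists>\<eta>. \<not> ff B L n m k \<eta>" unfolding B_def L_def by (intro exI[of _ "\<lambda>_. False"]) simp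
next
  fix n m1 m2 :: nat assume "m1 \<noteq> m2"
  then show "range (nu B L n m1) \<inter> range (nu B L n m2) = {}"
    unfolding B_def L_def by auto
qed

lemma tilde_top:
  fixes \<phi> :: square
  defines "B \<equiv> Build \<phi>" and "L \<equiv> Inr 0"
  shows "tilde_at W0 B L"
  unfolding tilde_at_def
proof (intro conjI allI impI)
  fix n m
  show "lt W0 (nu B L n m i) L" for i unfolding B_def L_def by simp
  show "lt W0 (nu B L n m i) (nu B L n m (Suc i))" for i
    unfolding B_def L_def by simp
  show "\<exists>i. (b, nu B L n m i) \<in> W0" if "lt W0 b L" for b
  proof (cases b)
    case (Inl p)
    obtain x y where p: "p = (x, y)" by fastforce
    then show ?thesis using Inl unfolding B_def L_def by (intro exI[of _ "Suc x"]) simp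
  next
    case (Inr c) then show ?thesis using that unfolding L_def by simp
  qed
  show "strict_mono (jj B L n m)" unfolding B_def L_def by (simp add: strict_mono_def)
  fix k
  show "ff B L n m k \<eta> = ff B L n m k \<eta>'"
    if h: "\<forall>i. jj B L n m k \<le> i \<and> i \<le> jj B L n m (Suc k) - 1 \<longrightarrow> \<eta> i = \<eta>' i" for \<eta> \<eta>'
    using h[rule_format, of k] unfolding B_def L_def by simp
  show "\<exists>\<eta>. ff B L n m k \<eta>" unfolding B_def L_def by (intro exI[of _ "\<lambda>_. True"]) simp
  show "\<exists>\<eta>. \<not> ff B L n m k \<eta>" unfolding B_def L_def by (intro exI[of _ "\<lambda>_. False"]) simp
next
  fix n m1 m2 :: nat assume "m1 \<noteq> m2"
  then show "range (nu B L n m1) \<inter> range (nu B L n m2) = {}"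
    unfolding B_def L_def by auto
qed

lemma tilde_Build: "tilde_ok W0 (Build \<phi>)"
  unfolding tilde_ok_at
proof (intro allI impI)
  fix l assume "is_limit_pt W0 l"
  then have "l = Inr 0 \<or> l = Inl (1, 0) \<or> (\<exists>a. l = Inl (Suc (Suc a), 0))"
    using limit_W0 by (metis One_nat_def not0_implies_Suc)
  then show "tilde_at W0 (Build \<phi>) l"
    using tilde_omega[of \<phi>] tilde_top[of \<phi>] tilde_succ[of \<phi>] by blast
qed

lemma Mq_cases: "Mq n b = (\<lambda>_. False) \<or> (\<exists>t. t < tau n 0 \<and> Mq n b = (\<lambda>a. a (prod_decode t)))"
  unfolding Mq_def by (cases n) auto

lemma Mq_eval:
  "subst (Mq (Suc n) b) (\<lambda>(i, j). \<phi> i j) a =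
    (if snd (prod_decode b) mod Suc (tau (Suc n) 0) < tau (Suc n) 0
     then \<phi> (fst (prod_decode (snd (prod_decode b) mod Suc (tau (Suc n) 0))))
            (snd (prod_decode (snd (prod_decode b) mod Suc (tau (Suc n) 0)))) a
     else False)"
  unfolding Mq_def subst_def by (simp add: case_prod_beta)

lemma hi_cases: "hi \<phi> n a b = (\<lambda>_. False) \<or> (\<exists>v. fst v < n \<and> hi \<phi> n a b = (\<lambda>as. as v))"
proof (cases "fst (prod_decode (fst (prod_decode b))) < n
        \<and> okv \<phi> (fst (prod_decode (fst (prod_decode b)))) (snd (prod_decode (fst (prod_decode b)))) (n + a)")
  case True
  then show ?thesis unfolding hi_def by (intro disjI2 exI[of _ "prod_decode (fst (prod_decode b))"]) simp
next
  case False
  show ?thesis unfolding hi_def if_not_P[OF False] by simp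
qed

lemma Fn_spec: "hi \<phi> n 1 m as = Fn \<phi> n m (vals \<phi> (Suc n) as)"
proof -
  have "\<exists>F. \<forall>as. hi \<phi> n 1 m as = F (vals \<phi> (Suc n) as)"
  proof (cases "fst (prod_decode (fst (prod_decode m))) < n
        \<and> okv \<phi> (fst (prod_decode (fst (prod_decode m)))) (snd (prod_decode (fst (prod_decode m)))) (n + 1)")
    case True
    then obtain F where F: "\<forall>a. a (fst (prod_decode (fst (prod_decode m))), snd (prod_decode (fst (prod_decode m))))
        = F (vals \<phi> (n + 1) a)" unfolding okv_def by blast
    show ?thesis using True F unfolding hi_def by (intro exI[of _ F]) simp
  next
    case False
    then show ?thesis unfolding hi_def by (intro exI[of _ "\<lambda>_. False"]) auto
  qed
  then show ?thesis unfolding Fn_def by (rule someI_ex[where P = "\<lambda>F. \<forall>as. hi \<phi> n 1 m as = F (vals \<phi> (Suc n) as)", THEN spec])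
qed

lemma okv_det:
  assumes S: "\<forall>a b. (\<forall>(i, j)\<in>S. \<phi> i j a = \<phi> i j b) \<longrightarrow> a (n, m) = b (n, m)"
  and T: "\<forall>(i, j)\<in>S. tau i j < tau N 0"
  shows "okv \<phi> n m N"
  unfolding okv_def
proof (intro exI allI)
  fix as
  define a0 where "a0 = (SOME a0. vals \<phi> N a0 = vals \<phi> N as)"
  have v: "vals \<phi> N a0 = vals \<phi> N as" unfolding a0_def by (rule someI[of _ as]) simp
  have "\<forall>(i, j)\<in>S. \<phi> i j a0 = \<phi> i j as"
  proof (intro ballI, clarify)
    fix i j assume ij: "(i, j) \<in> S"
    have "vals \<phi> N a0 (tau i j) = vals \<phi> N as (tau i j)" using v by simp
    then show "\<phi> i j a0 = \<phi> i j as" using T ij unfolding vals_def by auto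
  qed
  then have "a0 (n, m) = as (n, m)" using S by blast
  then show "as (n, m) = (\<lambda>u. (SOME a0. vals \<phi> N a0 = u) (n, m)) (vals \<phi> N as)"
    unfolding a0_def by simp
qed

lemma coh_omega:
  "tm (Build \<phi>) n (ord_plus W0 (Inl (Suc 0, 0)) m) a
     = gfun (Build \<phi>) (Inl (Suc 0, 0)) n m k (\<lambda>\<zeta>. tm (Build \<phi>) (Suc n) \<zeta> a)"
proof -
  let ?T = "tau (Suc n) 0"
  have mod1: "(k * Suc ?T + t) mod Suc ?T = t" if "t \<le> ?T" for t
  proof -
    have "(k * Suc ?T + t) mod Suc ?T = t mod Suc ?T" by (rule mod_mult_self3)
    then show ?thesis using that by simp
  qed
  have e1: "(\<lambda>t. if t < ?T then tm (Build \<phi>) (Suc n) (Inl (0, prod_encode (m, k * Suc ?T + t))) a else False)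
      = vals \<phi> (Suc n) a"
  proof
    fix t show "(if t < ?T then tm (Build \<phi>) (Suc n) (Inl (0, prod_encode (m, k * Suc ?T + t))) a else False)
      = vals \<phi> (Suc n) a t"
      unfolding vals_def B_tm Mq_eval using mod1[of t] by simp
  qed
  have e2: "tm (Build \<phi>) (Suc n) (Inl (0, prod_encode (m, k * Suc ?T + ?T))) a = False"
    unfolding B_tm Mq_eval using mod1[of ?T] by simp
  show ?thesis unfolding gfun_def B_nu B_ff
    using e1 e2 Fn_spec[of \<phi> n m a] by simp
qed

lemma coh_succ:
  "tm (Build \<phi>) n (ord_plus W0 (Inl (Suc (Suc b), 0)) m) a
     = gfun (Build \<phi>) (Inl (Suc (Suc b), 0)) n m k (\<lambda>\<zeta>. tm (Build \<phi>) (Suc n) \<zeta> a)"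
  unfolding gfun_def B_nu B_ff ord_plus_W0_Inl B_tm
  unfolding hi_def qn_def by auto

lemma coh_top:
  assumes Q: "inQ \<phi>"
  shows "\<exists>k0. \<forall>a k. k0 \<le> k \<longrightarrow> tm (Build \<phi>) n (ord_plus W0 (Inr 0) m) a
     = gfun (Build \<phi>) (Inr 0) n m k (\<lambda>\<zeta>. tm (Build \<phi>) (Suc n) \<zeta> a)"
proof -
  obtain S where S: "finite S" "\<forall>a b. (\<forall>(i, j)\<in>S. \<phi> i j a = \<phi> i j b) \<longrightarrow> a (n, m) = b (n, m)"
    using Q unfolding inQ_def by blast
  define K where "K = Max (insert 0 ((\<lambda>(i, j). tau i j) ` S))"
  have K: "tau i j \<le> K" if "(i, j) \<in> S" for i j
    unfolding K_def using S(1) that by (intro Max_ge) force+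
  show ?thesis
  proof (intro exI allI impI)
    fix a k assume k: "Suc K \<le> k"
    then obtain k' where k': "k = Suc k'" by (cases k) auto
    have "\<forall>(i, j)\<in>S. tau i j < tau (Suc n + k) 0"
    proof (clarify)
      fix i j assume "(i, j) \<in> S"
      then have "tau i j \<le> K" by (rule K)
      also have "K < Suc n + k" using k by simp
      also have "\<dots> \<le> tau (Suc n + k) 0" by (rule tau_ge)
      finally show "tau i j < tau (Suc n + k) 0" .
    qed
    then have ok: "okv \<phi> n m (Suc n + k)" by (rule okv_det[OF S(2)])
    show "tm (Build \<phi>) n (ord_plus W0 (Inr 0) m) a
     = gfun (Build \<phi>) (Inr 0) n m k (\<lambda>\<zeta>. tm (Build \<phi>) (Suc n) \<zeta> a)"
      unfolding gfun_def B_nu B_ff ord_plus_W0_Inr k' B_tm hi_def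
      using ok k' by simp
  qed
qed

lemma nzcl_oo: "nz_countable_limit oo"
  unfolding nz_countable_limit_def
proof (intro conjI ballI)
  show "Well_order oo" by (rule wo_oo)
  show "countable (Field oo)" by simp
  show "Field oo \<noteq> {}" by simp
  fix x :: "nat \<times> nat"
  obtain a b where "x = (a, b)" by fastforce
  then show "\<exists>y. lt oo x y" by (intro exI[of _ "(a, Suc b)"]) simp
qed

lemma dep_block0:
  assumes Q: "inQ \<phi>"
  shows "depends_only (subst (Mq n b) (\<lambda>(i, j). \<phi> i j)) {(l, k). l < n}"
proof -
  from Mq_cases[of n b] show ?thesis
  proof
    assume "Mq n b = (\<lambda>_. False)"
    then show ?thesis by (simp add: depends_only_const)
  next
    assume "\<exists>t. t < tau n 0 \<and> Mq n b = (\<lambda>a. a (prod_decode t))"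
    then obtain t where t: "t < tau n 0" "Mq n b = (\<lambda>a. a (prod_decode t))" by blast
    define i j where "i = fst (prod_decode t)" and "j = snd (prod_decode t)"
    have pd: "prod_decode t = (i, j)" unfolding i_def j_def by simp
    have tt: "tau i j = t" unfolding i_def j_def by simp
    have d: "depends_only (\<phi> i j) {(i', j'). tau i' j' \<le> tau i j}" using Q unfolding inQ_def by blast
    have "{(i', j'). tau i' j' \<le> tau i j} \<subseteq> {(l, k). l < n}"
    proof clarify
      fix i' j' assume "tau i' j' \<le> tau i j"
      then have "tau i' j' < tau n 0" using t(1) tt by simp
      then show "i' < n" by (rule tau_row)
    qed
    then have "depends_only (\<phi> i j) {(l, k). l < n}" using d depends_only_mono by blast
    then show ?thesis using t(2) pd by simp
  qed
qed

lemma dep_hi: "depends_only (hi \<phi> n a b) {(l, k). l < n}"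
  using hi_cases[of \<phi> n a b]
proof
  assume "hi \<phi> n a b = (\<lambda>_. False)" then show ?thesis by (simp add: depends_only_const)
next
  assume "\<exists>v. fst v < n \<and> hi \<phi> n a b = (\<lambda>as. as v)"
  then obtain v where "fst v < n" "hi \<phi> n a b = (\<lambda>as. as v)" by blast
  then show ?thesis by (cases v) (auto intro: depends_only_var)
qed

lemma dep_Build:
  assumes Q: "inQ \<phi>"
  shows "depends_only (tm (Build \<phi>) n (Inl \<alpha>)) {(l, k). l < n}"
proof -
  obtain a b where ab: "\<alpha> = (a, b)" by fastforce
  show ?thesis
  proof (cases a)
    case 0 then show ?thesis using ab dep_block0[OF Q] by simp
  next
    case (Suc a') then show ?thesis using ab dep_hi by simp
  qed
qed

lemma inR_Build:
  assumes Q: "inQ \<phi>"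
  shows "inR oo (Build \<phi>)"
  unfolding inR_def
proof (intro conjI allI impI)
  show "nz_countable_limit oo" by (rule nzcl_oo)
  show "tilde_ok W0 (Build \<phi>)" by (rule tilde_Build)
  fix n
  show "is_term (tm (Build \<phi>) n \<alpha>)" if "\<alpha> \<in> Field W0" for \<alpha>
  proof (cases \<alpha>)
    case (Inl p) then show ?thesis using dep_Build[OF Q] depends_only_is_term by blast
  next
    case (Inr m) then show ?thesis using is_term_var by simp
  qed
  show "tm (Build \<phi>) n (Inr m) = (\<lambda>a. a (n, m))" for m by simp
  show "depends_only (tm (Build \<phi>) n (Inl \<alpha>)) {(l, k). l < n}" for \<alpha> by (rule dep_Build[OF Q])
  fix m l assume lim: "is_limit_pt W0 l"
  show "\<exists>k0. \<forall>a k. k0 \<le> k \<longrightarrow> tm (Build \<phi>) n (ord_plus W0 l m) a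
      = gfun (Build \<phi>) l n m k (\<lambda>\<zeta>. tm (Build \<phi>) (Suc n) \<zeta> a)"
    using limit_W0[OF lim]
  proof
    assume "l = Inr 0" then show ?thesis using coh_top[OF Q] by simp
  next
    assume "\<exists>a. l = Inl (Suc a, 0)"
    then obtain a where a: "l = Inl (Suc a, 0)" by blast
    show ?thesis
    proof (cases a)
      case 0 then show ?thesis using a coh_omega by blast
    next
      case (Suc b) then show ?thesis using a coh_succ by blast
    qed
  qed
qed

lemma sigma_Build: "sigma oo (Build \<phi>) = (\<lambda>n m. subst (Mq n m) (\<lambda>(i, j). \<phi> i j))"
  unfolding sigma_def by simp

definition idq :: square where "idq = (\<lambda>i j a. a (i, j))"

lemma subst_idq: "subst t (\<lambda>(i, j). idq i j) = t"
  unfolding subst_def idq_def by (simp add: case_prod_beta)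

lemma inQ_idq: "inQ idq"
  unfolding inQ_def idq_def
proof (intro conjI allI)
  fix n m
  show "is_term (\<lambda>a. a (n, m))" by (rule is_term_var)
  show "depends_only (\<lambda>a. a (n, m)) {(i, j). tau i j \<le> tau n m}" by (rule depends_only_var) simp
  show "\<exists>S. finite S \<and> (\<forall>a b. (\<forall>(i, j)\<in>S. a (i, j) = b (i, j)) \<longrightarrow> a (n, m) = b (n, m))"
    by (intro exI[of _ "{(n, m)}"]) simp
qed

lemma sigma_id: "sigma oo (Build idq) = Mq"
  unfolding sigma_Build subst_idq by simp

lemma Mq_hit: "Mq (Suc (tau i j)) (prod_encode (0, tau i j)) = (\<lambda>a. a (i, j))"
proof -
  have lt: "tau i j < tau (Suc (tau i j)) 0" using tau_ge[of "Suc (tau i j)"] by simp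
  then have "tau i j mod Suc (tau (Suc (tau i j)) 0) = tau i j" by simp
  then show ?thesis unfolding Mq_def using lt by simp
qed

lemma Mq_dep: "depends_only (Mq n m) {(i, j). tau i j < tau n 0}"
  using Mq_cases[of n m]
proof
  assume "Mq n m = (\<lambda>_. False)" then show ?thesis by (simp add: depends_only_const)
next
  assume "\<exists>t. t < tau n 0 \<and> Mq n m = (\<lambda>a. a (prod_decode t))"
  then obtain t where t: "t < tau n 0" "Mq n m = (\<lambda>a. a (prod_decode t))" by blast
  have "prod_decode t \<in> {(i, j). tau i j < tau n 0}"
    using t(1) by (cases "prod_decode t") (metis case_prod_conv mem_Collect_eq tau_pe prod_decode_inverse)
  then show ?thesis using t(2) depends_only_var by simp
qed

lemma inQ_Mq: "inQ Mq"
  unfolding inQ_def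
proof (intro conjI allI)
  fix n m
  have "depends_only (Mq n m) {(i, j). tau i j \<le> tau n m}"
  proof (rule depends_only_mono[OF Mq_dep[of n m]])
    show "{(i, j). tau i j < tau n 0} \<subseteq> {(i, j). tau i j \<le> tau n m}"
      using tau_row_le[of n m] by auto
  qed
  then show "is_term (Mq n m)" "depends_only (Mq n m) {(i, j). tau i j \<le> tau n m}"
    using depends_only_is_term by auto
next
  fix i j
  show "\<exists>S. finite S \<and> (\<forall>a b. (\<forall>(n, m)\<in>S. Mq n m a = Mq n m b) \<longrightarrow> a (i, j) = b (i, j))"
    by (intro exI[of _ "{(Suc (tau i j), prod_encode (0, tau i j))}"]) (simp add: Mq_hit)
qed

definition dets :: "'a rel \<Rightarrow> ('a + nat) cond \<Rightarrow> (nat \<times> nat) set \<Rightarrow> trm \<Rightarrow> bool" where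
  "dets r p S t \<longleftrightarrow> (\<forall>a b. (\<forall>(i, j)\<in>S. sigma r p i j a = sigma r p i j b) \<longrightarrow> t a = t b)"

lemma R_facts:
  assumes "inR r p"
  shows "Well_order r" "Field r \<noteq> {}" "\<forall>x\<in>Field r. \<exists>y. lt r x y" "Well_order (plus_omega r)"
proof -
  have "nz_countable_limit r" using assms unfolding inR_def by (rule conjunct1)
  then have a: "Well_order r" "Field r \<noteq> {}" "\<forall>x\<in>Field r. \<exists>y. lt r x y"
    unfolding nz_countable_limit_def by blast+
  then show "Well_order r" "Field r \<noteq> {}" "\<forall>x\<in>Field r. \<exists>y. lt r x y" by blast+
  show "Well_order (plus_omega r)" using a(1) by (rule wo_plus_omega)
qed

lemma Field_plus_omega: "Field (plus_omega r) = Inl ` Field r \<union> range Inr"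
  unfolding plus_omega_def Field_osum by simp

lemma preds_Inl: "{z. lt (osum r s) z (Inl x)} = Inl ` {z. lt r z x}"
proof (rule set_eqI)
  fix z show "z \<in> {z. lt (osum r s) z (Inl x)} \<longleftrightarrow> z \<in> Inl ` {z. lt r z x}"
    by (cases z) auto
qed

lemma inR_coh:
  assumes "inR r p" "is_limit_pt (plus_omega r) l"
  shows "\<exists>k0. \<forall>a k. k0 \<le> k \<longrightarrow>
           tm p n (ord_plus (plus_omega r) l m) a = gfun p l n m k (\<lambda>\<zeta>. tm p (Suc n) \<zeta> a)"
proof -
  have "\<forall>n m l. is_limit_pt (plus_omega r) l \<longrightarrow>
        (\<exists>k0. \<forall>a k. k0 \<le> k \<longrightarrow>
           tm p n (ord_plus (plus_omega r) l m) a = gfun p l n m k (\<lambda>\<zeta>. tm p (Suc n) \<zeta> a))"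
    using assms(1) unfolding inR_def by (elim conjE) assumption
  then show ?thesis using assms(2) by blast
qed

lemma inR_tilde:
  assumes "inR r p" "is_limit_pt (plus_omega r) l"
  shows "tilde_at (plus_omega r) p l"
proof -
  have "tilde_ok (plus_omega r) p"
    using assms(1) unfolding inR_def by (elim conjE) assumption
  then show ?thesis using assms(2) unfolding tilde_ok_at by blast
qed

lemma det_step_A:
  assumes R: "inR r p" and x: "x \<in> Field r" and f: "finite {z. lt (plus_omega r) z (Inl x)}"
  shows "\<exists>S. finite S \<and> dets r p S (tm p n (Inl x))"
proof -
  have W: "Well_order r" using R_facts[OF R] by blast
  have fin: "finite {z. lt r z x}"
    using f unfolding plus_omega_def preds_Inl by (simp add: finite_image_iff)
  have "ord_nth r (card {z. lt r z x}) = x" by (rule ord_nth_eq[OF W x fin refl])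
  then show ?thesis unfolding dets_def sigma_def
    by (intro exI[of _ "{(n, card {z. lt r z x})}"]) simp
qed

lemma det_sigma:
  assumes R: "inR r p"
  shows "\<forall>n. \<alpha> \<in> Field (plus_omega r) \<longrightarrow> (\<exists>S. finite S \<and> dets r p S (tm p n \<alpha>))"
proof -
  let ?W = "plus_omega r"
  have Wr: "Well_order r" and ne: "Field r \<noteq> {}" and nm: "\<forall>x\<in>Field r. \<exists>y. lt r x y"
    and W: "Well_order ?W" using R_facts[OF R] by blast+
  have inf: "infinite (Field r)" by (rule field_infinite[OF Wr ne nm])
  show ?thesis
  proof (rule wf_induct[OF wo_facts(5)[OF W], of "\<lambda>\<alpha>. \<forall>n. \<alpha> \<in> Field ?W \<longrightarrow> (\<exists>S. finite S \<and> dets r p S (tm p n \<alpha>))"])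
    fix \<alpha>
    assume IH: "\<forall>y. (y, \<alpha>) \<in> ?W - Id \<longrightarrow> (\<forall>n. y \<in> Field ?W \<longrightarrow> (\<exists>S. finite S \<and> dets r p S (tm p n y)))"
    show "\<forall>n. \<alpha> \<in> Field ?W \<longrightarrow> (\<exists>S. finite S \<and> dets r p S (tm p n \<alpha>))"
    proof (intro allI impI)
      fix n assume af: "\<alpha> \<in> Field ?W"
      define M where "M = {l. (l, \<alpha>) \<in> ?W \<and> finite {z. (l, z) \<in> ?W \<and> lt ?W z \<alpha>}}"
      have MF: "M \<subseteq> Field ?W" unfolding M_def by (auto intro: FieldI1)
      have e: "{z. (\<alpha>, z) \<in> ?W \<and> lt ?W z \<alpha>} = {}" using lt_asym[OF W] by blast
      have "finite {z. (\<alpha>, z) \<in> ?W \<and> lt ?W z \<alpha>}" unfolding e by simp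
      then have "\<alpha> \<in> M" unfolding M_def using le_refl[OF W af] by simp
      then have "M \<noteq> {}" by blast
      then obtain l where l: "l \<in> M" "\<forall>a'\<in>M. (l, a') \<in> ?W" using wo_min[OF W MF] by blast
      have la: "(l, \<alpha>) \<in> ?W" and lfin: "finite {z. (l, z) \<in> ?W \<and> lt ?W z \<alpha>}"
        using l(1) unfolding M_def by auto
      have lF: "l \<in> Field ?W" using la by (rule FieldI1)
      show "\<exists>S. finite S \<and> dets r p S (tm p n \<alpha>)"
      proof (cases "\<exists>y. lt ?W y l")
        case False
        have sub: "{z. lt ?W z \<alpha>} \<subseteq> {z. (l, z) \<in> ?W \<and> lt ?W z \<alpha>}"
        proof
          fix z assume z: "z \<in> {z. lt ?W z \<alpha>}"
          then have zF: "z \<in> Field ?W" using lt_Field by (metis mem_Collect_eq)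
          have "lt ?W z l \<or> z = l \<or> lt ?W l z" by (rule lt_total[OF W zF lF])
          then have "(l, z) \<in> ?W"
          proof (elim disjE)
            assume "lt ?W z l" then show ?thesis using False by blast
          next
            assume "z = l" then show ?thesis using le_refl[OF W lF] by simp
          next
            assume "lt ?W l z" then show ?thesis unfolding lt_def by simp
          qed
          then show "z \<in> {z. (l, z) \<in> ?W \<and> lt ?W z \<alpha>}" using z by simp
        qed
        then have fp: "finite {z. lt ?W z \<alpha>}" using lfin by (rule finite_subset)
        show ?thesis
        proof (cases \<alpha>)
          case (Inl x)
          then have "x \<in> Field r" using af unfolding Field_plus_omega by auto
          moreover have "finite {z. lt ?W z (Inl x)}" using fp Inl by simp
          ultimately have "\<exists>S. finite S \<and> dets r p S (tm p n (Inl x))" by (rule det_step_A[OF R])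
          then show ?thesis using Inl by simp
        next
          case (Inr c)
          have "Inl ` Field r \<subseteq> {z. lt ?W z \<alpha>}"
          proof
            fix z :: "'a + nat" assume "z \<in> Inl ` Field r"
            then obtain x where "z = Inl x" "x \<in> Field r" by blast
            then show "z \<in> {z. lt ?W z \<alpha>}" using Inr unfolding plus_omega_def by simp
          qed
          then have "finite (Inl ` Field r :: ('a + nat) set)" using fp by (rule finite_subset)
          then have "finite (Field r)" by (simp add: finite_image_iff)
          then show ?thesis using inf by simp
        qed
      next
        case True
        have lim: "is_limit_pt ?W l"
          unfolding is_limit_pt_def
        proof (intro conjI allI impI)
          show "l \<in> Field ?W" by (rule lF)
          show "\<exists>y. lt ?W y l" by (rule True)
          fix y assume yl: "lt ?W y l"
          show "\<exists>z. lt ?W y z \<and> lt ?W z l"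
          proof (rule ccontr)
            assume nz: "\<not> (\<exists>z. lt ?W y z \<and> lt ?W z l)"
            have ya: "(y, \<alpha>) \<in> ?W" using lt_le_trans[OF W yl la] unfolding lt_def by simp
            have "{z. (y, z) \<in> ?W \<and> lt ?W z \<alpha>} \<subseteq> insert y {z. (l, z) \<in> ?W \<and> lt ?W z \<alpha>}"
            proof
              fix z assume z: "z \<in> {z. (y, z) \<in> ?W \<and> lt ?W z \<alpha>}"
              show "z \<in> insert y {z. (l, z) \<in> ?W \<and> lt ?W z \<alpha>}"
              proof (cases "z = y")
                case False
                then have yz: "lt ?W y z" using z unfolding lt_def by simp
                have zF: "z \<in> Field ?W" using z by (auto intro: FieldI2)
                have "lt ?W z l \<or> z = l \<or> lt ?W l z" by (rule lt_total[OF W zF lF])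
                then have "(l, z) \<in> ?W"
                proof (elim disjE)
                  assume "lt ?W z l" then show ?thesis using nz yz by blast
                next
                  assume "z = l" then show ?thesis using le_refl[OF W lF] by simp
                next
                  assume "lt ?W l z" then show ?thesis unfolding lt_def by simp
                qed
                then show ?thesis using z by simp
              qed simp
            qed
            then have "finite {z. (y, z) \<in> ?W \<and> lt ?W z \<alpha>}" using lfin by (rule finite_subset[OF _ finite_insert[THEN iffD2]])
            then have "y \<in> M" unfolding M_def using ya by simp
            then have "(l, y) \<in> ?W" using l(2) by (rule bspec[rotated])
            then show False using lt_asym[OF W yl] by simp
          qed
        qed
        define m where "m = card {z. (l, z) \<in> ?W \<and> lt ?W z \<alpha>}"
        have op: "ord_plus ?W l m = \<alpha>" by (rule ord_plus_eq[OF W af la lfin]) (simp add: m_def)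
        obtain k0 where k0: "\<forall>a k. k0 \<le> k \<longrightarrow> tm p n (ord_plus ?W l m) a = gfun p l n m k (\<lambda>\<zeta>. tm p (Suc n) \<zeta> a)"
          using inR_coh[OF R lim] by blast
        have coh: "tm p n \<alpha> a = ff p l n m k0 (\<lambda>i. tm p (Suc n) (nu p l n m i) a)" for a
          using k0 op unfolding gfun_def by auto
        have tl: "tilde_at ?W p l" by (rule inR_tilde[OF R lim])
        have nul: "lt ?W (nu p l n m i) l" for i using tl unfolding tilde_at_def by blast
        have ffI: "\<forall>\<eta> \<eta>'. (\<forall>i. jj p l n m k0 \<le> i \<and> i \<le> jj p l n m (Suc k0) - 1 \<longrightarrow> \<eta> i = \<eta>' i)
                 \<longrightarrow> ff p l n m k0 \<eta> = ff p l n m k0 \<eta>'" using tl unfolding tilde_at_def by blast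
        define I where "I = {i. jj p l n m k0 \<le> i \<and> i \<le> jj p l n m (Suc k0) - 1}"
        have finI: "finite I" unfolding I_def by (rule finite_subset[of _ "{..jj p l n m (Suc k0) - 1}"]) auto
        have ih: "\<exists>S. finite S \<and> dets r p S (tm p (Suc n) (nu p l n m i))" for i
        proof -
          have lt1: "lt ?W (nu p l n m i) \<alpha>" by (rule lt_le_trans[OF W nul la])
          then have h1: "(nu p l n m i, \<alpha>) \<in> ?W - Id" unfolding lt_def by simp
          have h2: "nu p l n m i \<in> Field ?W" using lt1 lt_Field by metis
          have "\<forall>n'. nu p l n m i \<in> Field ?W \<longrightarrow> (\<exists>S. finite S \<and> dets r p S (tm p n' (nu p l n m i)))"
          proof -
            have "(nu p l n m i, \<alpha>) \<in> ?W - Id \<longrightarrow> (\<forall>n'. nu p l n m i \<in> Field ?W \<longrightarrow> (\<exists>S. finite S \<and> dets r p S (tm p n' (nu p l n m i))))"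
              using IH by (rule spec)
            then show ?thesis using h1 by (rule mp)
          qed
          then show ?thesis using h2 by blast
        qed
        define Si where "Si i = (SOME S. finite S \<and> dets r p S (tm p (Suc n) (nu p l n m i)))" for i
        have Si: "finite (Si i) \<and> dets r p (Si i) (tm p (Suc n) (nu p l n m i))" for i
          unfolding Si_def by (rule someI_ex[OF ih])
        show ?thesis
        proof (intro exI conjI)
          show "finite (\<Union>i\<in>I. Si i)" using finI Si by simp
          show "dets r p (\<Union>i\<in>I. Si i) (tm p n \<alpha>)"
            unfolding dets_def
          proof (intro allI impI)
            fix a b assume ag: "\<forall>(i, j)\<in>\<Union>i\<in>I. Si i. sigma r p i j a = sigma r p i j b"
            have ag': "\<And>i. jj p l n m k0 \<le> i \<and> i \<le> jj p l n m (Suc k0) - 1 \<Longrightarrow>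
                tm p (Suc n) (nu p l n m i) a = tm p (Suc n) (nu p l n m i) b"
            proof -
              fix i assume "jj p l n m k0 \<le> i \<and> i \<le> jj p l n m (Suc k0) - 1"
              then have iI: "i \<in> I" unfolding I_def by simp
              have "\<forall>(i', j)\<in>Si i. sigma r p i' j a = sigma r p i' j b" using ag iI by blast
              then show "tm p (Suc n) (nu p l n m i) a = tm p (Suc n) (nu p l n m i) b"
                using Si[of i] unfolding dets_def by blast
            qed
            have "ff p l n m k0 (\<lambda>i. tm p (Suc n) (nu p l n m i) a) = ff p l n m k0 (\<lambda>i. tm p (Suc n) (nu p l n m i) b)"
              by (rule ffI[rule_format], erule ag')
            then show "tm p n \<alpha> a = tm p n \<alpha> b" using coh by simp
          qed
        qed
      qed
    qed
  qed
qed

lemma inR_dep: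
  assumes "inR r p" "\<alpha> \<in> Field r"
  shows "depends_only (tm p n (Inl \<alpha>)) {(l, k). l < n}"
proof -
  have "\<forall>n \<alpha>. \<alpha> \<in> Field r \<longrightarrow> depends_only (tm p n (Inl \<alpha>)) {(l, k). l < n}"
    using assms(1) unfolding inR_def by (elim conjE) assumption
  then show ?thesis using assms(2) by blast
qed

lemma inR_top:
  assumes "inR r p"
  shows "tm p n (Inr m) = (\<lambda>a. a (n, m))"
proof -
  have "\<forall>n m. tm p n (Inr m) = (\<lambda>a. a (n, m))"
    using assms(1) unfolding inR_def by (elim conjE) assumption
  then show ?thesis by blast
qed

lemma ord_nth_osum:
  assumes R: "inR r p"
  shows "ord_nth r m \<in> Field r \<and> ord_nth (osum r oo) m = Inl (ord_nth r m)"
proof -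
  have Wr: "Well_order r" and ne: "Field r \<noteq> {}" and nm: "\<forall>x\<in>Field r. \<exists>y. lt r x y"
    using R_facts[OF R] by blast+
  obtain y where y: "y \<in> Field r" "finite {z. lt r z y}" "card {z. lt r z y} = m"
    using nth_exists[OF Wr ne nm] by blast
  have e: "ord_nth r m = y" by (rule ord_nth_eq[OF Wr y])
  have W2: "Well_order (osum r oo)" by (rule wo_osum[OF Wr wo_oo])
  have "ord_nth (osum r oo) m = Inl y"
  proof (rule ord_nth_eq[OF W2])
    show "Inl y \<in> Field (osum r oo)" using y(1) by simp
    show "finite {z. lt (osum r oo) z (Inl y)}" unfolding preds_Inl using y(2) by simp
    show "card {z. lt (osum r oo) z (Inl y)} = m" unfolding preds_Inl using y(3)
      by (simp add: card_image)
  qed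
  then show ?thesis using e y(1) by simp
qed

lemma stack_sigma:
  assumes R: "inR r p"
  shows "sigma (osum r oo) (stack r oo p q) = sq_subst (sigma r p) (sigma oo q)"
proof (rule ext, rule ext)
  fix n m
  have o: "ord_nth (osum r oo) m = Inl (ord_nth r m)" using ord_nth_osum[OF R] by blast
  show "sigma (osum r oo) (stack r oo p q) n m = sq_subst (sigma r p) (sigma oo q) n m"
    unfolding sigma_def sq_subst_def o unfolding stack_def Let_def by simp
qed

lemma subst_dep:
  assumes t: "depends_only t X" and psi: "\<forall>v\<in>X. depends_only (\<psi> v) Y"
  shows "depends_only (subst t \<psi>) Y"
proof -
  obtain V where V: "finite V" "V \<subseteq> X" "\<forall>a b. (\<forall>v\<in>V. a v = b v) \<longrightarrow> t a = t b"
    using t unfolding depends_only_def by blast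
  have ex: "\<exists>U. finite U \<and> U \<subseteq> Y \<and> (\<forall>a b. (\<forall>u\<in>U. a u = b u) \<longrightarrow> \<psi> v a = \<psi> v b)" if "v \<in> V" for v
    using psi that V(2) unfolding depends_only_def by blast
  define U where "U v = (SOME U. finite U \<and> U \<subseteq> Y \<and> (\<forall>a b. (\<forall>u\<in>U. a u = b u) \<longrightarrow> \<psi> v a = \<psi> v b))" for v
  have U: "finite (U v) \<and> U v \<subseteq> Y \<and> (\<forall>a b. (\<forall>u\<in>U v. a u = b u) \<longrightarrow> \<psi> v a = \<psi> v b)" if "v \<in> V" for v
    unfolding U_def by (rule someI_ex[OF ex[OF that]])
  show ?thesis
    unfolding depends_only_def
  proof (intro exI conjI allI impI)
    show "finite (\<Union>v\<in>V. U v)" using V(1) U by simp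
    show "(\<Union>v\<in>V. U v) \<subseteq> Y" using U by blast
    fix a b :: assign assume ag: "\<forall>u\<in>\<Union>v\<in>V. U v. a u = b u"
    have "\<forall>v\<in>V. \<psi> v a = \<psi> v b"
    proof
      fix v assume v: "v \<in> V"
      then have "\<forall>u\<in>U v. a u = b u" using ag by blast
      then show "\<psi> v a = \<psi> v b" using U[OF v] by blast
    qed
    then show "subst t \<psi> a = subst t \<psi> b" unfolding subst_def using V(3) by simp
  qed
qed

lemma inQ_comp:
  assumes R: "inR r p"
  shows "inQ (sq_subst (sigma r p) Mq)"
  unfolding inQ_def
proof (intro conjI allI)
  fix n m
  have x: "ord_nth r m \<in> Field r" using ord_nth_osum[OF R] by blast
  have d: "depends_only (sigma r p n m) {(l, k). l < n}"
    unfolding sigma_def by (rule inR_dep[OF R x])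
  have "\<forall>v\<in>{(l, k). l < n}. depends_only ((\<lambda>(i, j). Mq i j) v) {(i, j). tau i j \<le> tau n m}"
  proof (clarify)
    fix i j assume i: "i < n"
    have "{(i', j'). tau i' j' < tau i 0} \<subseteq> {(i, j). tau i j \<le> tau n m}"
    proof (clarify)
      fix i' j' assume "tau i' j' < tau i 0"
      moreover have "tau i 0 \<le> tau n 0" using i by (intro tau_mono0) simp
      moreover have "tau n 0 \<le> tau n m" by (rule tau_row_le)
      ultimately show "tau i' j' \<le> tau n m" by simp
    qed
    then show "depends_only (Mq i j) {(i, j). tau i j \<le> tau n m}"
      by (rule depends_only_mono[OF Mq_dep])
  qed
  then have "depends_only (sq_subst (sigma r p) Mq n m) {(i, j). tau i j \<le> tau n m}"
    unfolding sq_subst_def by (rule subst_dep[OF d])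
  then show "is_term (sq_subst (sigma r p) Mq n m)"
    "depends_only (sq_subst (sigma r p) Mq n m) {(i, j). tau i j \<le> tau n m}"
    using depends_only_is_term by blast+
next
  fix i j
  define N where "N = Suc (tau i j)"
  define Bc where "Bc = prod_encode (0, tau i j)"
  have "Inr Bc \<in> Field (plus_omega r)" unfolding Field_plus_omega by simp
  then obtain S where S: "finite S" "dets r p S (tm p N (Inr Bc))"
    using det_sigma[OF R] by blast
  have top: "tm p N (Inr Bc) = (\<lambda>a. a (N, Bc))" by (rule inR_top[OF R])
  show "\<exists>S. finite S \<and> (\<forall>a b. (\<forall>(n, m)\<in>S. sq_subst (sigma r p) Mq n m a = sq_subst (sigma r p) Mq n m b)
      \<longrightarrow> a (i, j) = b (i, j))"
  proof (intro exI conjI allI impI)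
    show "finite S" by (rule S(1))
    fix a b
    assume ag: "\<forall>(n, m)\<in>S. sq_subst (sigma r p) Mq n m a = sq_subst (sigma r p) Mq n m b"
    define a' where "a' = (\<lambda>v. (\<lambda>(i, j). Mq i j) v a)"
    define b' where "b' = (\<lambda>v. (\<lambda>(i, j). Mq i j) v b)"
    have "\<forall>(n, m)\<in>S. sigma r p n m a' = sigma r p n m b'"
      using ag unfolding a'_def b'_def sq_subst_def subst_def by blast
    then have "a' (N, Bc) = b' (N, Bc)" using S(2) top unfolding dets_def by simp
    then have "Mq N Bc a = Mq N Bc b" unfolding a'_def b'_def by simp
    then show "a (i, j) = b (i, j)" unfolding N_def Bc_def Mq_hit by simp
  qed
qed

theorem mainTheorem15:
  shows "(\<exists>rD. inR oo rD \<and> inQ (sigma oo rD) \<and>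
            (\<forall>(r :: nat rel) p. inR r p \<longrightarrow> inQ (sigma (osum r oo) (stack r oo p rD))))
       \<and> (\<exists>rM. inR oo rM \<and>
            (\<forall>\<phi>. inQ \<phi> \<longrightarrow> (\<exists>rr. inR oo rr \<and> sq_subst (sigma oo rM) \<phi> = sigma oo rr)))"
proof (intro conjI)
  show "\<exists>rD. inR oo rD \<and> inQ (sigma oo rD) \<and>
            (\<forall>(r :: nat rel) p. inR r p \<longrightarrow> inQ (sigma (osum r oo) (stack r oo p rD)))"
  proof (intro exI conjI allI impI)
    show "inR oo (Build idq)" by (rule inR_Build[OF inQ_idq])
    show "inQ (sigma oo (Build idq))" unfolding sigma_id by (rule inQ_Mq)
    fix r :: "nat rel" and p assume R: "inR r p"
    show "inQ (sigma (osum r oo) (stack r oo p (Build idq)))"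
      unfolding stack_sigma[OF R] sigma_id by (rule inQ_comp[OF R])
  qed
  have "\<forall>\<phi>. inQ \<phi> \<longrightarrow> (\<exists>rr. inR oo rr \<and> sq_subst (sigma oo (Build idq)) \<phi> = sigma oo rr)"
  proof (intro allI impI)
    fix \<phi> assume Q: "inQ \<phi>"
    have "sq_subst (sigma oo (Build idq)) \<phi> = sigma oo (Build \<phi>)"
      unfolding sigma_Build subst_idq sq_subst_def by (rule refl)
    then show "\<exists>rr. inR oo rr \<and> sq_subst (sigma oo (Build idq)) \<phi> = sigma oo rr"
      using inR_Build[OF Q] by blast
  qed
  then show "\<exists>rM. inR oo rM \<and>
            (\<forall>\<phi>. inQ \<phi> \<longrightarrow> (\<exists>rr. inR oo rr \<and> sq_subst (sigma oo rM) \<phi> = sigma oo rr))"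
    using inR_Build[OF inQ_idq] by blast
qed


end
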